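(* Let $(\Omega,T)$ be a subshift over a finite alphabet $A\subset\mathbb{R}$ satisfying (PW). Then the function $M^E$ is uniform for each $E\in\mathbb{R}$.
   Context: Let $A\subset\mathbb{R}$ be finite with the discrete topology, $A^{\mathbb{Z}}$ with the product topology, and $T$ the shift $(Ta)(n)=a(n+1)$. A subshift is a closed $T$-invariant set $\Omega\subset A^{\mathbb{Z}}$. Let $\mathcal{W}$ be the set of all finite subwords of elements of $\Omega$; $|x|$ denotes the length of a word $x$ and $\sharp_v(x)$ the number of occurrences of the word $v$ in $x$. Condition (PW): there exists $C>0$ such that $\liminf_{|x|\to\infty,\,x\in\mathcal{W}}\frac{\sharp_v(x)}{|x|}|v|\ge C$ for every $v\in\mathcal{W}$. (Such subshifts are strictly ergodic.) For $E\in\mathbb{R}$ let $M^E(\omega)=\begin{pmatrix}E-\omega(1)&-1\\1&0\end{pmatrix}$ and $M^E(n,\omega)=M^E(T^{n-1}\omega)\cdots M^E(\omega)$ for $n>0$, $M^E(0,\omega)=\mathrm{Id}$, $M^E(n,\omega)=M^E(T^n\omega)^{-1}\cdots M^E(T^{-1}\omega)^{-1}$ for $n<0$. $M^E$ is called uniform if, with $\|\cdot\|$ the operator norm, the limit $\lim_{|n|\to\infty}\frac1{|n|}\log\|M^E(n,\omega)\|$ exists for every $\omega\in\Omega$ and the convergence is uniform on $\Omega$. *)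

theory Defs
  imports "HOL-Analysis.Analysis"
begin

text \<open>Sequences over the alphabet are functions int => real; the product topology
  on int => real is the library instance from Function_Topology.\<close>

definition shift :: "(int \<Rightarrow> real) \<Rightarrow> int \<Rightarrow> real" where
  "shift \<omega> = (\<lambda>n. \<omega> (n + 1))"

text \<open>k-fold power of the shift, for integer k: (T^k w)(n) = w(n+k).\<close>
definition shiftpow :: "int \<Rightarrow> (int \<Rightarrow> real) \<Rightarrow> int \<Rightarrow> real" where
  "shiftpow k \<omega> = (\<lambda>n. \<omega> (n + k))"

definition subshift :: "real set \<Rightarrow> (int \<Rightarrow> real) set \<Rightarrow> bool" where
  "subshift A \<Omega> \<longleftrightarrow> \<Omega> \<subseteq> {\<omega>. \<forall>n. \<omega> n \<in> A} \<and> closed \<Omega> \<and> shift ` \<Omega> = \<Omega>"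

text \<open>The word of length n of omega starting at position m.\<close>
definition word_at :: "(int \<Rightarrow> real) \<Rightarrow> int \<Rightarrow> nat \<Rightarrow> real list" where
  "word_at \<omega> m n = map (\<lambda>i. \<omega> (m + int i)) [0..<n]"

text \<open>Nonempty finite subwords of elements of Omega.\<close>
definition subwords :: "(int \<Rightarrow> real) set \<Rightarrow> real list set" where
  "subwords \<Omega> = {word_at \<omega> m n | \<omega> m n. \<omega> \<in> \<Omega> \<and> n \<ge> 1}"

definition occurrences :: "real list \<Rightarrow> real list \<Rightarrow> nat" where
  "occurrences v x = card {i. i + length v \<le> length x \<and> take (length v) (drop i x) = v}"

text \<open>Condition (PW): liminf over |x| -> infinity, x in W, of
  occurrences v x / |x| * |v| is at least C, for every v in W.\<close>
definition PW :: "(int \<Rightarrow> real) set \<Rightarrow> bool" where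
  "PW \<Omega> \<longleftrightarrow> (\<exists>C>0. \<forall>v\<in>subwords \<Omega>. \<forall>\<epsilon>>0. \<exists>N. \<forall>x\<in>subwords \<Omega>. length x \<ge> N \<longrightarrow>
      real (occurrences v x) / real (length x) * real (length v) \<ge> C - \<epsilon>)"

definition transfer :: "real \<Rightarrow> (int \<Rightarrow> real) \<Rightarrow> real^2^2" where
  "transfer E \<omega> = (\<chi> i j. if i = 1 \<and> j = 1 then E - \<omega> 1
                          else if i = 1 \<and> j = 2 then -1
                          else if i = 2 \<and> j = 1 then 1 else 0)"

fun cocycle_pos :: "real \<Rightarrow> nat \<Rightarrow> (int \<Rightarrow> real) \<Rightarrow> real^2^2" where
  "cocycle_pos E 0 \<omega> = mat 1"
| "cocycle_pos E (Suc k) \<omega> = transfer E (shiftpow (int k) \<omega>) ** cocycle_pos E k \<omega>"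

fun cocycle_neg :: "real \<Rightarrow> nat \<Rightarrow> (int \<Rightarrow> real) \<Rightarrow> real^2^2" where
  "cocycle_neg E 0 \<omega> = mat 1"
| "cocycle_neg E (Suc k) \<omega> =
     matrix_inv (transfer E (shiftpow (- int (Suc k)) \<omega>)) ** cocycle_neg E k \<omega>"

text \<open>M^E(n, omega) for integer n.\<close>
definition cocycle :: "real \<Rightarrow> int \<Rightarrow> (int \<Rightarrow> real) \<Rightarrow> real^2^2" where
  "cocycle E n \<omega> = (if n \<ge> 0 then cocycle_pos E (nat n) \<omega> else cocycle_neg E (nat (- n)) \<omega>)"

text \<open>Uniformity: (1/|n|) log ||M^E(n,w)|| converges as |n| -> infinity,
  uniformly in w in Omega (operator norm w.r.t. the Euclidean norm).\<close>
definition uniform_cocycle :: "(int \<Rightarrow> real) set \<Rightarrow> real \<Rightarrow> bool" where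
  "uniform_cocycle \<Omega> E \<longleftrightarrow> (\<exists>L. uniform_limit \<Omega>
      (\<lambda>n \<omega>. ln (onorm (\<lambda>x. cocycle E n \<omega> *v x)) / real_of_int \<bar>n\<bar>) L (sup at_top at_bot))"

end

theory Submission
  imports Defs
begin

(* ---- part Comb ---- *)
definition occs :: "real list \<Rightarrow> real list \<Rightarrow> nat set" where
  "occs v x = {i. i + length v \<le> length x \<and> take (length v) (drop i x) = v}"

lemma occurrences_occs: "occurrences v x = card (occs v x)"
  unfolding occurrences_def occs_def by simp

lemma occs_subset: "occs v x \<subseteq> {..length x}"
  unfolding occs_def by auto

lemma finite_occs[simp]: "finite (occs v x)"
  using occs_subset finite_subset by blast

lemma take_drop_eq_iff:
  assumes "i + length v \<le> length x"
  shows "take (length v) (drop i x) = v \<longleftrightarrow> (\<forall>k<length v. x ! (i + k) = v ! k)"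
proof
  assume h: "take (length v) (drop i x) = v"
  show "\<forall>k<length v. x ! (i + k) = v ! k"
  proof (intro allI impI)
    fix k assume "k < length v"
    then have "v ! k = take (length v) (drop i x) ! k" using h by simp
    also have "\<dots> = x ! (i + k)" using assms \<open>k < length v\<close> by simp
    finally show "x ! (i + k) = v ! k" by simp
  qed
next
  assume h: "\<forall>k<length v. x ! (i + k) = v ! k"
  show "take (length v) (drop i x) = v"
    by (rule nth_equalityI) (use assms h in auto)
qed

lemma occs_iff: "i \<in> occs v x \<longleftrightarrow> i + length v \<le> length x \<and> (\<forall>k<length v. x ! (i + k) = v ! k)"
  unfolding occs_def using take_drop_eq_iff by blast

definition sep :: "nat \<Rightarrow> nat set \<Rightarrow> bool" where
  "sep l S \<longleftrightarrow> (\<forall>i\<in>S. \<forall>j\<in>S. i < j \<longrightarrow> i + l \<le> j)"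

definition packs :: "real list \<Rightarrow> real list \<Rightarrow> nat \<Rightarrow> bool" where
  "packs w y m \<longleftrightarrow> (\<exists>S. S \<subseteq> occs w y \<and> card S = m \<and> sep (length w) S)"

lemma window_card:
  assumes "sep s P" "1 \<le> s" "l \<le> K * s"
  shows "card {q\<in>P. a \<le> q \<and> q < a + l} \<le> K"
proof -
  let ?Q = "{q\<in>P. a \<le> q \<and> q < a + l}"
  have inj: "inj_on (\<lambda>q. (q - a) div s) ?Q"
  proof (rule inj_onI)
    fix q q' assume q: "q \<in> ?Q" and q': "q' \<in> ?Q" and e: "(q - a) div s = (q' - a) div s"
    show "q = q'"
    proof (rule ccontr)
      assume "q \<noteq> q'"
      then consider "q < q'" | "q' < q" by linarith
      then show False
      proof cases
        case 1
        then have "q + s \<le> q'" using assms(1) q q' unfolding sep_def by auto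
        then have "(q - a) div s + 1 \<le> (q' - a) div s"
        proof -
          have "(q - a) div s + 1 = (q - a + s) div s" using assms(2) by simp
          also have "\<dots> \<le> (q' - a) div s" using \<open>q + s \<le> q'\<close> q by (intro div_le_mono) auto
          finally show ?thesis .
        qed
        then show False using e by simp
      next
        case 2
        then have "q' + s \<le> q" using assms(1) q q' unfolding sep_def by auto
        then have "(q' - a) div s + 1 \<le> (q - a) div s"
        proof -
          have "(q' - a) div s + 1 = (q' - a + s) div s" using assms(2) by simp
          also have "\<dots> \<le> (q - a) div s" using \<open>q' + s \<le> q\<close> q' by (intro div_le_mono) auto
          finally show ?thesis .
        qed
        then show False using e by simp
      qed
    qed
  qed
  have img: "(\<lambda>q. (q - a) div s) ` ?Q \<subseteq> {..<K}"
  proof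
    fix z assume "z \<in> (\<lambda>q. (q - a) div s) ` ?Q"
    then obtain q where q: "q \<in> ?Q" and z: "z = (q - a) div s" by blast
    have "q - a < K * s" using q assms(3) by auto
    then have "(q - a) div s < K" using assms(2)
      by (simp add: div_less_iff_less_mult)
    then show "z \<in> {..<K}" using z by simp
  qed
  show ?thesis using card_inj_on_le[OF inj img] by simp
qed

lemma greedy:
  assumes "finite P" "sep s P" "1 \<le> s" "l \<le> K * s" "1 \<le> l"
  shows "\<exists>S\<subseteq>P. sep l S \<and> card P \<le> K * card S"
  using assms
proof (induction "card P" arbitrary: P rule: less_induct)
  case less
  show ?case
  proof (cases "P = {}")
    case True then show ?thesis unfolding sep_def by auto
  next
    case False
    define p where "p = Min P"
    have pP: "p \<in> P" using False less.prems(1) p_def by simp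
    have pmin: "\<And>q. q \<in> P \<Longrightarrow> p \<le> q" using less.prems(1) p_def by simp
    define Q where "Q = {q\<in>P. p + l \<le> q}"
    have QP: "Q \<subseteq> P" unfolding Q_def by auto
    have finQ: "finite Q" using QP less.prems(1) finite_subset by blast
    have sepQ: "sep s Q" using less.prems(2) QP unfolding sep_def by blast
    have "p \<notin> Q" using less.prems(5) unfolding Q_def by auto
    then have "Q \<subset> P" using QP pP by blast
    then have cQ: "card Q < card P" by (rule psubset_card_mono[OF less.prems(1)])
    obtain S' where S': "S' \<subseteq> Q" "sep l S'" "card Q \<le> K * card S'"
      using less.hyps[OF cQ finQ sepQ less.prems(3,4,5)] by blast
    define S where "S = insert p S'"
    have "p \<notin> S'" using S'(1) \<open>p \<notin> Q\<close> by blast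
    have finS': "finite S'" using S'(1) finQ finite_subset by blast
    have cS: "card S = Suc (card S')" unfolding S_def using \<open>p \<notin> S'\<close> finS' by simp
    have SP: "S \<subseteq> P" unfolding S_def using S'(1) QP pP by blast
    have sepS: "sep l S" unfolding sep_def S_def
    proof (intro ballI impI)
      fix i j assume i: "i \<in> insert p S'" and j: "j \<in> insert p S'" and ij: "i < j"
      show "i + l \<le> j"
      proof (cases "i = p")
        case True
        then have "j \<in> S'" using j ij by auto
        then show ?thesis using S'(1) True unfolding Q_def by auto
      next
        case False
        then have "i \<in> S'" using i by auto
        have "j \<noteq> p" using ij pmin \<open>i \<in> S'\<close> S'(1) QP by (metis in_mono leD)
        then have "j \<in> S'" using j by auto
        then show ?thesis using S'(2) \<open>i \<in> S'\<close> ij unfolding sep_def by auto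
      qed
    qed
    have split: "P = {q\<in>P. p \<le> q \<and> q < p + l} \<union> Q" using pmin unfolding Q_def by auto
    have "card P \<le> card {q\<in>P. p \<le> q \<and> q < p + l} + card Q"
      by (subst split) (rule card_Un_le)
    also have "\<dots> \<le> K + K * card S'"
      using window_card[OF less.prems(2,3,4), of p] S'(3) by simp
    also have "\<dots> = K * card S" using cS by simp
    finally show ?thesis using SP sepS by blast
  qed
qed

lemma packs_shift:
  assumes "packs w z m"
  shows "packs w (g @ z) m"
proof -
  obtain S where S: "S \<subseteq> occs w z" "card S = m" "sep (length w) S"
    using assms unfolding packs_def by blast
  let ?T = "(\<lambda>i. i + length g) ` S"
  have inj: "inj_on (\<lambda>i. i + length g) S" by (rule inj_onI) simp
  have "?T \<subseteq> occs w (g @ z)"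
  proof
    fix t assume "t \<in> ?T"
    then obtain i where i: "i \<in> S" "t = i + length g" by blast
    then have io: "i \<in> occs w z" using S(1) by blast
    show "t \<in> occs w (g @ z)" unfolding occs_iff
      using io i(2) unfolding occs_iff by (auto simp: nth_append add.commute add.left_commute)
  qed
  moreover have "card ?T = m" using card_image[OF inj] S(2) by simp
  moreover have "sep (length w) ?T" using S(3) unfolding sep_def by auto
  ultimately show ?thesis unfolding packs_def by blast
qed

definition per :: "nat \<Rightarrow> real list \<Rightarrow> bool" where
  "per d z \<longleftrightarrow> (\<forall>k. k + d < length z \<longrightarrow> z ! k = z ! (k + d))"

lemma per_step:
  assumes "per d z" "a + q * d < length z"
  shows "z ! (a + q * d) = z ! a"
  using assms(2)
proof (induction q)
  case 0 then show ?case by simp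
next
  case (Suc q)
  have "z ! (a + q * d) = z ! (a + q * d + d)"
    using assms(1) Suc.prems unfolding per_def by (simp add: add.assoc)
  then show ?case using Suc by (simp add: add.assoc add.commute add.left_commute)
qed

lemma per_mod:
  assumes "per d z" "a < length z" "b < length z" "a mod d = b mod d"
  shows "z ! a = z ! b"
proof -
  have gen: "z ! a = z ! b" if "a \<le> b" "b < length z" "a mod d = b mod d" for a b
  proof -
    have "d dvd (b - a)" using that mod_eq_dvd_iff_nat[of a b d] by simp
    then obtain q where q: "b - a = d * q" by blast
    then have "b = a + q * d" using that(1) by (simp add: mult.commute)
    then show ?thesis using per_step[OF assms(1)] that(2) by simp
  qed
  show ?thesis
  proof (cases "a \<le> b")
    case True then show ?thesis using gen assms by blast
  next
    case False then show ?thesis using gen[of b a] assms by simp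
  qed
qed

lemma per_sub:
  assumes "per d z" "i + length x \<le> length z" "\<forall>k<length x. z ! (i + k) = x ! k"
  shows "per d x"
  unfolding per_def
proof (intro allI impI)
  fix k assume k: "k + d < length x"
  have "x ! k = z ! (i + k)" using assms(3) k by simp
  also have "\<dots> = z ! (i + k + d)" using assms(1,2) k unfolding per_def by simp
  also have "\<dots> = x ! (k + d)" using assms(3) k by (simp add: add.assoc)
  finally show "x ! k = x ! (k + d)" .
qed

lemma packs_periodic:
  assumes "per d z" "1 \<le> d" "L \<le> length z" "take L z = v" "L' = (L div d) * d" "1 \<le> L'"
  shows "packs (take L' v) z (length z div L')"
proof -
  have LL: "L' \<le> L" using assms(5) by (metis div_mult_mod_eq le_add1)
  have lv: "length v = L" using assms(3,4) by auto
  have lw: "length (take L' v) = L'" using LL lv by simp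
  define S where "S = (\<lambda>j. j * L') ` {..<length z div L'}"
  have inj: "inj_on (\<lambda>j. j * L') {..<length z div L'}" using assms(6) by (rule_tac inj_onI) simp
  have cS: "card S = length z div L'" unfolding S_def using card_image[OF inj] by simp
  have "S \<subseteq> occs (take L' v) z"
  proof
    fix t assume "t \<in> S"
    then obtain j where j: "j < length z div L'" "t = j * L'" unfolding S_def by blast
    have "(j + 1) * L' \<le> length z"
      using j(1) by (metis Suc_eq_plus1 Suc_leI div_less_iff_less_mult assms(6) le_eq_less_or_eq linorder_not_le One_nat_def less_le_trans zero_less_one)
    then have tl: "t + L' \<le> length z" using j(2) by (simp add: algebra_simps)
    have "\<forall>k<L'. z ! (t + k) = take L' v ! k"
    proof (intro allI impI)
      fix k assume k: "k < L'"
      have "t + k = k + (j * (L div d)) * d" using j(2) assms(5) by (simp add: mult.assoc)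
      then have "z ! (t + k) = z ! k" using per_step[OF assms(1), of k "j * (L div d)"] tl k by (simp add: add.commute)
      also have "\<dots> = v ! k" using assms(4) k LL by (metis less_le_trans nth_take)
      also have "\<dots> = take L' v ! k" using k by simp
      finally show "z ! (t + k) = take L' v ! k" .
    qed
    then show "t \<in> occs (take L' v) z" unfolding occs_iff using tl lw by simp
  qed
  moreover have "sep (length (take L' v)) S"
    unfolding sep_def S_def lw
  proof (intro ballI impI)
    fix i j assume "i \<in> (\<lambda>j. j * L') ` {..<length z div L'}" "j \<in> (\<lambda>j. j * L') ` {..<length z div L'}" "i < j"
    then obtain a b where "i = a * L'" "j = b * L'" "a < b" by auto
    then show "i + L' \<le> j"
      by (metis Suc_leI add.commute mult_Suc mult_le_cancel2)
  qed
  ultimately show ?thesis unfolding packs_def using cS by blast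
qed

(* ---- part Comb2 ---- *)
lemma occs_sub: "S \<subseteq> occs v x \<Longrightarrow> i \<in> S \<Longrightarrow> i + length v \<le> length x \<and> (\<forall>k<length v. x ! (i + k) = v ! k)"
  using occs_iff by blast

lemma packs_compose:
  assumes "packs u y m" "packs w u k" "w \<noteq> []"
  shows "packs w y (m * k)"
proof -
  obtain S where S: "S \<subseteq> occs u y" "card S = m" "sep (length u) S"
    using assms(1) unfolding packs_def by blast
  obtain K where K: "K \<subseteq> occs w u" "card K = k" "sep (length w) K"
    using assms(2) unfolding packs_def by blast
  have finS: "finite S" using finite_subset[OF S(1) finite_occs] .
  have finK: "finite K" using finite_subset[OF K(1) finite_occs] .
  have Kb: "\<And>j. j \<in> K \<Longrightarrow> j + length w \<le> length u" using occs_sub[OF K(1)] by auto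
  have wpos: "0 < length w" using assms(3) by simp
  let ?f = "\<lambda>(i, j). i + j"
  have key: "i + j < i' + j' \<Longrightarrow> i + j + length w \<le> i' + j'"
    if "i \<in> S" "j \<in> K" "i' \<in> S" "j' \<in> K" for i j i' j'
  proof -
    assume lt: "i + j < i' + j'"
    consider "i = i'" | "i < i'" | "i' < i" by linarith
    then show ?thesis
    proof cases
      case 1
      then have "j < j'" using lt by simp
      then show ?thesis using K(3) that 1 unfolding sep_def by fastforce
    next
      case 2
      then have "i + length u \<le> i'" using S(3) that unfolding sep_def by auto
      then show ?thesis using Kb[OF that(2)] by linarith
    next
      case 3
      then have "i' + length u \<le> i" using S(3) that unfolding sep_def by auto
      then show ?thesis using Kb[OF that(4)] lt wpos by linarith
    qed
  qed
  have inj: "inj_on ?f (S \<times> K)"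
  proof (rule inj_onI)
    fix p q assume p: "p \<in> S \<times> K" and q: "q \<in> S \<times> K" and e: "?f p = ?f q"
    obtain i j where pij: "p = (i, j)" "i \<in> S" "j \<in> K" using p by blast
    obtain i' j' where qij: "q = (i', j')" "i' \<in> S" "j' \<in> K" using q by blast
    have e': "i + j = i' + j'" using e pij qij by simp
    show "p = q"
    proof (rule ccontr)
      assume "p \<noteq> q"
      then have "i \<noteq> i'" using pij qij e' by auto
      then consider "i < i'" | "i' < i" by linarith
      then show False
      proof cases
        case 1
        then have "i + length u \<le> i'" using S(3) pij qij unfolding sep_def by auto
        then show False using Kb[OF pij(3)] e' wpos by linarith
      next
        case 2
        then have "i' + length u \<le> i" using S(3) pij qij unfolding sep_def by auto
        then show False using Kb[OF qij(3)] e' wpos by linarith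
      qed
    qed
  qed
  let ?T = "?f ` (S \<times> K)"
  have cT: "card ?T = m * k" using card_image[OF inj] S(2) K(2) by (simp add: card_cartesian_product)
  have "?T \<subseteq> occs w y"
  proof
    fix t assume "t \<in> ?T"
    then obtain i j where ij: "i \<in> S" "j \<in> K" "t = i + j" by auto
    have iu: "i + length u \<le> length y" "\<forall>k<length u. y ! (i + k) = u ! k"
      using occs_sub[OF S(1) ij(1)] by auto
    have jw: "j + length w \<le> length u" "\<forall>k<length w. u ! (j + k) = w ! k"
      using occs_sub[OF K(1) ij(2)] by auto
    show "t \<in> occs w y" unfolding occs_iff
    proof (intro conjI allI impI)
      show "t + length w \<le> length y" using ij(3) iu(1) jw(1) by linarith
      fix k assume k: "k < length w"
      have "y ! (t + k) = u ! (j + k)" using iu(2) ij(3) jw(1) k by (simp add: add.assoc)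
      also have "\<dots> = w ! k" using jw(2) k by simp
      finally show "y ! (t + k) = w ! k" .
    qed
  qed
  moreover have "sep (length w) ?T"
    unfolding sep_def
  proof (intro ballI impI)
    fix a b assume a: "a \<in> ?T" and b: "b \<in> ?T" and ab: "a < b"
    obtain i j where "i \<in> S" "j \<in> K" "a = i + j" using a by auto
    moreover obtain i' j' where "i' \<in> S" "j' \<in> K" "b = i' + j'" using b by auto
    ultimately show "a + length w \<le> b" using key ab by blast
  qed
  ultimately show ?thesis unfolding packs_def using cT by blast
qed

locale subadd =
  fixes W :: "real list set" and F :: "real list \<Rightarrow> real" and c C :: real
  assumes fc: "x \<in> W \<Longrightarrow> take n (drop i x) \<in> W \<or> take n (drop i x) = []"
    and nonempty: "x \<in> W \<Longrightarrow> x \<noteq> []"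
    and long: "\<exists>x\<in>W. n \<le> length x"
    and sub: "F (x @ y) \<le> F x + F y"
    and mono: "F x \<le> F (x @ y) + F y"
    and F0: "F [] = 0"
    and bnd: "x \<in> W \<Longrightarrow> \<bar>F x\<bar> \<le> c * length x"
    and cpos: "0 < c"
    and Cpos: "0 < C" and C1: "C \<le> 1"
    and PW: "v \<in> W \<Longrightarrow> \<exists>N. \<forall>x\<in>W. N \<le> length x \<longrightarrow> C * length x \<le> 2 * real (card (occs v x)) * length v"
begin

lemma take_W: "x \<in> W \<or> x = [] \<Longrightarrow> take n x \<in> W \<or> take n x = []"
  using fc[of x n 0] by auto

lemma drop_W: "x \<in> W \<or> x = [] \<Longrightarrow> drop n x \<in> W \<or> drop n x = []"
  using fc[of x "length x" n] by auto

lemma occ_W: "y \<in> W \<Longrightarrow> i \<in> occs v y \<Longrightarrow> v \<noteq> [] \<Longrightarrow> v \<in> W"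
  using fc[of y "length v" i] unfolding occs_def by auto

lemma packs_F:
  fixes \<alpha> D :: real
  assumes "packs w y m" "y \<in> W \<or> y = []" "\<forall>g\<in>W. F g \<le> \<alpha> * length g + D" "0 \<le> D"
  shows "F y \<le> m * F w + \<alpha> * (real (length y) - real m * length w) + (m + 1) * D"
  using assms(1,2)
proof (induction m arbitrary: y)
  case 0
  show ?case
  proof (cases "y = []")
    case True then show ?thesis using F0 assms(4) by simp
  next
    case False then show ?thesis using 0 assms(3) by auto
  qed
next
  case (Suc m)
  obtain S where S: "S \<subseteq> occs w y" "card S = Suc m" "sep (length w) S"
    using Suc.prems(1) unfolding packs_def by blast
  have finS: "finite S" using finite_subset[OF S(1) finite_occs] .
  have Sne: "S \<noteq> {}" using S(2) by auto
  define i where "i = Max S"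
  have iS: "i \<in> S" using finS Sne i_def by simp
  have imax: "\<And>j. j \<in> S \<Longrightarrow> j \<le> i" using finS i_def by simp
  have iocc: "i + length w \<le> length y" "\<forall>k<length w. y ! (i + k) = w ! k"
    using occs_sub[OF S(1) iS] by auto
  define S' where "S' = S - {i}"
  have cS': "card S' = m" using S(2) iS finS unfolding S'_def by simp
  have "S' \<subseteq> occs w (take i y)"
  proof
    fix j assume j: "j \<in> S'"
    then have "j \<in> S" "j < i" using imax unfolding S'_def by force+
    then have "j + length w \<le> i" using S(3) iS unfolding sep_def by auto
    moreover have "\<forall>k<length w. y ! (j + k) = w ! k" using occs_sub[OF S(1) \<open>j \<in> S\<close>] by auto
    ultimately show "j \<in> occs w (take i y)" unfolding occs_iff using iocc(1) by auto
  qed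
  moreover have "sep (length w) S'" using S(3) unfolding sep_def S'_def by auto
  ultimately have pk: "packs w (take i y) m" using cS' unfolding packs_def by blast
  have IH: "F (take i y) \<le> m * F w + \<alpha> * (real (length (take i y)) - real m * length w) + (m + 1) * D"
    using Suc.IH[OF pk take_W[OF Suc.prems(2)]] by (simp add: add.commute)
  define r where "r = drop (i + length w) y"
  have tw: "take (length w) (drop i y) = w" using iS S(1) unfolding occs_def by auto
  have ysplit: "y = take i y @ (w @ r)"
  proof -
    have "y = take i y @ drop i y" by simp
    also have "drop i y = take (length w) (drop i y) @ drop (length w) (drop i y)" by (rule append_take_drop_id[symmetric])
    also have "\<dots> = w @ r" using tw unfolding r_def by (simp add: add.commute)
    finally show ?thesis .
  qed
  have Fr: "F r \<le> \<alpha> * length r + D"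
  proof (cases "r = []")
    case True then show ?thesis using F0 assms(4) by simp
  next
    case False
    then have "r \<in> W" using drop_W[OF Suc.prems(2), of "i + length w"] unfolding r_def by auto
    then show ?thesis using assms(3) by auto
  qed
  have "F y = F (take i y @ (w @ r))" by (rule arg_cong[OF ysplit])
  also have "\<dots> \<le> F (take i y) + F (w @ r)" by (rule sub)
  also have "\<dots> \<le> F (take i y) + F w + F r" using sub[of w r] by simp
  finally have Fy: "F y \<le> F (take i y) + F w + F r" .
  have lt: "length (take i y) = i" using iocc(1) by simp
  have lr: "real (length r) = real (length y) - real i - real (length w)"
    unfolding r_def using iocc(1) by simp
  show ?case using Fy IH Fr lt lr by (simp add: algebra_simps)
qed

end

(* ---- part Comb3 ---- *)
context subadd begin

lemma per_of_occs:
  assumes "i \<in> occs v y" "j \<in> occs v y" "i < j" "j < i + length v"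
  shows "per (j - i) v"
  unfolding per_def
proof (intro allI impI)
  fix k assume k: "k + (j - i) < length v"
  have a: "y ! (i + k') = v ! k'" if "k' < length v" for k' using assms(1) that unfolding occs_iff by auto
  have b: "y ! (j + k') = v ! k'" if "k' < length v" for k' using assms(2) that unfolding occs_iff by auto
  have "v ! (k + (j - i)) = y ! (i + (k + (j - i)))" using a k by simp
  also have "i + (k + (j - i)) = j + k" using assms(3) by simp
  also have "y ! (j + k) = v ! k" using b k by simp
  finally show "v ! k = v ! (k + (j - i))" by simp
qed

lemma key:
  assumes v: "v \<in> W" and k1: "4 \<le> k1"
  shows "\<exists>L' N1. length v - length v div k1 \<le> L' \<and> L' \<le> length v \<and> 1 \<le> L' \<and>
     (\<forall>y\<in>W. N1 \<le> length y \<longrightarrow> (\<exists>m. packs (take L' v) y m \<and>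
         C * length y \<le> 8 * real k1 * (real m * real L')))"
proof -
  define L where "L = length v"
  have L1: "1 \<le> L" using nonempty[OF v] unfolding L_def by (cases v) auto
  show ?thesis
  proof (cases "\<exists>d. 1 \<le> d \<and> d \<le> L div k1 \<and> per d v")
    case False
    obtain N where N: "\<forall>x\<in>W. N \<le> length x \<longrightarrow> C * length x \<le> 2 * real (card (occs v x)) * length v"
      using PW[OF v] by blast
    have "\<forall>y\<in>W. N \<le> length y \<longrightarrow> (\<exists>m. packs (take L v) y m \<and>
         C * length y \<le> 8 * real k1 * (real m * real L))"
    proof (intro ballI impI)
      fix y assume y: "y \<in> W" "N \<le> length y"
      let ?P = "occs v y"
      have sepP: "sep (L div k1 + 1) ?P" unfolding sep_def
      proof (intro ballI impI)
        fix i j assume i: "i \<in> ?P" and j: "j \<in> ?P" and ij: "i < j"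
        show "i + (L div k1 + 1) \<le> j"
        proof (rule ccontr)
          assume "\<not> ?thesis"
          then have jl: "j - i \<le> L div k1" by simp
          have "L div k1 < L" using L1 k1 by (intro div_less_dividend) auto
          then have "j < i + length v" using jl ij unfolding L_def by linarith
          then have "per (j - i) v" using per_of_occs[OF i j ij] by simp
          then show False using False jl ij by auto
        qed
      qed
      have k1pos: "0 < k1" using k1 by simp
      have Lk: "L \<le> k1 * (L div k1 + 1)"
      proof -
        have e1: "k1 * (L div k1) + L mod k1 = L" by (rule mult_div_mod_eq)
        have e2: "k1 * (L div k1 + 1) = k1 * (L div k1) + k1" by simp
        have "L mod k1 < k1" using k1pos by simp
        then show ?thesis using e1 e2 by linarith
      qed
      obtain S where S: "S \<subseteq> ?P" "sep L S" "card ?P \<le> k1 * card S"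
        using greedy[OF finite_occs sepP _ Lk L1] by auto
      have tv: "take L v = v" unfolding L_def by simp
      have pk: "packs (take L v) y (card S)" unfolding packs_def tv using S(1,2) L_def by blast
      have "C * length y \<le> 2 * real (card ?P) * L" using N y unfolding L_def by auto
      also have "\<dots> \<le> 2 * real (k1 * card S) * L"
      proof -
        have "real (card ?P) \<le> real (k1 * card S)" using S(3) of_nat_le_iff by blast
        then show ?thesis by (intro mult_right_mono mult_left_mono) auto
      qed
      also have "\<dots> \<le> 8 * real k1 * (real (card S) * real L)" by simp
      finally show "\<exists>m. packs (take L v) y m \<and> C * length y \<le> 8 * real k1 * (real m * real L)"
        using pk by blast
    qed
    then show ?thesis unfolding L_def using L1 L_def by (intro exI[of _ L] exI[of _ N]) auto
  next
    case True
    then obtain d where d: "1 \<le> d" "d \<le> L div k1" "per d v" by blast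
    define L' where "L' = (L div d) * d"
    have 4: "4 * d \<le> L"
    proof -
      have "4 * d \<le> k1 * (L div k1)" using d(2) k1 by (intro mult_mono) auto
      also have "\<dots> \<le> L" by simp
      finally show ?thesis .
    qed
    have L'L: "L' \<le> L" unfolding L'_def by (metis div_mult_mod_eq le_add1)
    have L'gt: "L < L' + d"
    proof -
      have "L = L' + L mod d" unfolding L'_def by simp
      moreover have "L mod d < d" using d(1) by simp
      ultimately show ?thesis by linarith
    qed
    have L'1: "d \<le> L'"
    proof -
      have "d \<le> L" using 4 by linarith
      then have "0 < L div d" using d(1) by (auto simp: div_greater_zero_iff)
      then have "1 \<le> L div d" by simp
      then show ?thesis unfolding L'_def by simp
    qed
    have L'low: "L - L div k1 \<le> L'" using L'gt d(2) by linarith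
    define w where "w = take L' v"
    have lw: "length w = L'" unfolding w_def using L'L L_def by simp
    have wne: "w \<noteq> []" using lw L'1 d(1) by auto
    have G: "packs w z (length z div L')" if "per d z" "L \<le> length z" "take L z = v" for z
      unfolding w_def using packs_periodic[OF that(1) d(1) that(2) that(3) L'_def] L'1 d(1) by simp
    define U where "U = {z\<in>W. L \<le> length z \<and> take L z = v \<and> per d z}"
    have vU: "v \<in> U" unfolding U_def L_def using v d(3) by simp
    have main: "\<exists>N1. \<forall>y\<in>W. N1 \<le> length y \<longrightarrow> (\<exists>m. packs w y m \<and>
         C * length y \<le> 8 * real k1 * (real m * real L'))"
    proof (cases "\<exists>B. \<forall>z\<in>U. length z \<le> B")
      case True
      then obtain B where B: "\<forall>z\<in>U. length z \<le> B" by blast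
      have subB: "length ` U \<subseteq> {..B}" using B by auto
      have finl: "finite (length ` U)" using finite_subset[OF subB] by simp
      have neU: "length ` U \<noteq> {}" using vU by blast
      define l where "l = Max (length ` U)"
      have "l \<in> length ` U" unfolding l_def by (rule Max_in[OF finl neU])
      then obtain u where uU: "u \<in> U" and lu: "length u = l" by auto
      have lmax: "\<And>z. z \<in> U \<Longrightarrow> length z \<le> l" unfolding l_def using finl by auto
      have uW: "u \<in> W" and Ll: "L \<le> l" and tu: "take L u = v" and pu: "per d u"
        using uU lu unfolding U_def by auto
      have uv: "u ! k = v ! k" if "k < L" for k using tu that by (metis nth_take)
      have sepu: "sep (l - d + 1) (occs u y)" if y: "y \<in> W" for y
        unfolding sep_def
      proof (intro ballI impI)
        fix i j assume i: "i \<in> occs u y" and j: "j \<in> occs u y" and ij: "i < j"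
        show "i + (l - d + 1) \<le> j"
        proof (rule ccontr)
          assume "\<not> ?thesis"
          then have jl: "j \<le> i + l - d" using 4 Ll by arith
          have yi: "y ! (i + k) = u ! k" if "k < l" for k using i that lu unfolding occs_iff by auto
          have yj: "y ! (j + k) = u ! k" if "k < l" for k using j that lu unfolding occs_iff by auto
          have jy: "j + l \<le> length y" using j lu unfolding occs_iff by auto
          define z where "z = take (j + l - i) (drop i y)"
          have lz: "length z = j + l - i" unfolding z_def using jy ij by simp
          have zn: "z ! k = y ! (i + k)" if "k < length z" for k unfolding z_def using that lz jy ij by simp
          have zW: "z \<in> W" using fc[OF y, of "j + l - i" i] lz ij unfolding z_def by auto
          have pz: "per d z" unfolding per_def
          proof (intro allI impI)
            fix k assume k: "k + d < length z"
            show "z ! k = z ! (k + d)"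
            proof (cases "k + d < l")
              case True
              have "z ! k = u ! k" using zn yi k True by simp
              also have "\<dots> = u ! (k + d)" using pu True unfolding per_def lu by simp
              also have "\<dots> = z ! (k + d)" using zn yi k True by (simp add: add.assoc)
              finally show ?thesis .
            next
              case False
              define k' where "k' = k - (j - i)"
              have kk: "i + k = j + k'" unfolding k'_def using False jl ij 4 Ll by arith
              have k'd: "k' + d < l" unfolding k'_def using k lz ij False jl by arith
              have "z ! k = y ! (j + k')" using zn k kk by simp
              also have "\<dots> = u ! k'" using yj k'd by simp
              also have "\<dots> = u ! (k' + d)" using pu k'd unfolding per_def lu by simp
              also have "\<dots> = y ! (j + (k' + d))" using yj k'd by simp
              also have "j + (k' + d) = i + (k + d)" using kk by simp
              also have "y ! (i + (k + d)) = z ! (k + d)" using zn k by simp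
              finally show ?thesis .
            qed
          qed
          have tz: "take L z = v"
          proof (rule nth_equalityI)
            show "length (take L z) = length v" using lz Ll ij unfolding L_def by simp
            fix k assume "k < length (take L z)"
            then have k: "k < L" "k < length z" by auto
            have "take L z ! k = z ! k" using k by simp
            also have "\<dots> = y ! (i + k)" using zn k by simp
            also have "\<dots> = u ! k" using yi k Ll by simp
            also have "\<dots> = v ! k" using uv k by simp
            finally show "take L z ! k = v ! k" .
          qed
          have "z \<in> U" unfolding U_def using zW pz tz lz Ll ij by auto
          then have "length z \<le> l" by (rule lmax)
          then show False using lz ij by simp
        qed
      qed
      obtain Nu where Nu: "\<forall>x\<in>W. Nu \<le> length x \<longrightarrow> C * length x \<le> 2 * real (card (occs u x)) * length u"
        using PW[OF uW] by blast
      have "\<forall>y\<in>W. Nu \<le> length y \<longrightarrow> (\<exists>m. packs w y m \<and> C * length y \<le> 8 * real k1 * (real m * real L'))"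
      proof (intro ballI impI)
        fix y assume y: "y \<in> W" "Nu \<le> length y"
        have l2: "l \<le> 2 * (l - d + 1)" using 4 Ll by arith
        have l1: "1 \<le> l" using Ll L1 by simp
        obtain S where S: "S \<subseteq> occs u y" "sep l S" "card (occs u y) \<le> 2 * card S"
          using greedy[OF finite_occs sepu[OF y(1)] _ l2 l1] by auto
        have pS: "packs u y (card S)" unfolding packs_def using S lu by blast
        have pw: "packs w u (l div L')" using G[OF pu] Ll tu lu by simp
        have pc: "packs w y (card S * (l div L'))" by (rule packs_compose[OF pS pw wne])
        have ld: "l \<le> 2 * ((l div L') * L')"
        proof -
          have "L' \<le> l" using L'L Ll by arith
          then have "0 < l div L'" using L'1 d(1) by (auto simp: div_greater_zero_iff)
          then have "1 \<le> l div L'" by simp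
          then have "L' \<le> (l div L') * L'" by simp
          moreover have "l = (l div L') * L' + l mod L'" by simp
          moreover have "l mod L' < L'" using L'1 d(1) by simp
          ultimately show ?thesis by arith
        qed
        have "C * length y \<le> 2 * real (card (occs u y)) * l" using Nu y lu by auto
        also have "\<dots> \<le> 2 * real (2 * card S) * l"
        proof -
          have "real (card (occs u y)) \<le> real (2 * card S)" using S(3) of_nat_le_iff by blast
          then show ?thesis by (intro mult_right_mono mult_left_mono) auto
        qed
        also have "\<dots> = 2 * real (card S) * real (2 * l)" by simp
        also have "\<dots> \<le> 2 * real (card S) * real (2 * (2 * ((l div L') * L')))"
        proof -
          have "2 * l \<le> 2 * (2 * ((l div L') * L'))" using ld by (simp add: mult.commute)
          then have "real (2 * l) \<le> real (2 * (2 * ((l div L') * L')))" using of_nat_le_iff by blast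
          then show ?thesis by (intro mult_left_mono) auto
        qed
        also have "\<dots> = 8 * (real (card S * (l div L')) * real L')" by simp
        also have "\<dots> \<le> 8 * real k1 * (real (card S * (l div L')) * real L')"
        proof -
          have "(8::real) \<le> 8 * real k1" using k1 by simp
          from mult_right_mono[OF this, of "real (card S * (l div L')) * real L'"] show ?thesis by simp
        qed
        finally show "\<exists>m. packs w y m \<and> C * length y \<le> 8 * real k1 * (real m * real L')"
          using pc by blast
      qed
      then show ?thesis by blast
    next
      case False
      then have unb: "\<And>B. \<exists>z\<in>U. B < length z" by (meson not_le)
      have allper: "per d x" if x: "x \<in> W" for x
      proof -
        obtain Nx where Nx: "\<forall>z\<in>W. Nx \<le> length z \<longrightarrow> C * length z \<le> 2 * real (card (occs x z)) * length x"
          using PW[OF x] by blast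
        obtain z where z: "z \<in> U" "Nx < length z" using unb by blast
        have zW: "z \<in> W" and pz: "per d z" using z(1) unfolding U_def by auto
        have "0 < C * length z" using Cpos z(2) by (intro mult_pos_pos) auto
        also have "\<dots> \<le> 2 * real (card (occs x z)) * length x" using Nx zW z(2) by auto
        finally have "card (occs x z) \<noteq> 0" by (cases "card (occs x z)") auto
        then obtain i where "i \<in> occs x z" by (metis card.empty equals0I)
        then show ?thesis using per_sub[OF pz] unfolding occs_iff by blast
      qed
      obtain Nv where Nv: "\<forall>z\<in>W. Nv \<le> length z \<longrightarrow> C * length z \<le> 2 * real (card (occs v z)) * length v"
        using PW[OF v] by blast
      have "\<forall>y\<in>W. max Nv (4 * L) \<le> length y \<longrightarrow> (\<exists>m. packs w y m \<and> C * length y \<le> 8 * real k1 * (real m * real L'))"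
      proof (intro ballI impI)
        fix y assume y: "y \<in> W" "max Nv (4 * L) \<le> length y"
        have py: "per d y" using allper y(1) by blast
        have "0 < length y" using y(2) L1 by linarith
        then have "0 < C * length y" using Cpos by (intro mult_pos_pos) auto
        also have "\<dots> \<le> 2 * real (card (occs v y)) * length v" using Nv y by auto
        finally have "card (occs v y) \<noteq> 0" by (cases "card (occs v y)") auto
        then obtain t where t: "t \<in> occs v y" by (metis card.empty equals0I)
        have ty: "t + L \<le> length y" "\<And>k. k < L \<Longrightarrow> y ! (t + k) = v ! k"
          using t unfolding occs_iff L_def by auto
        define t0 where "t0 = t mod d"
        have t0t: "t0 \<le> t" "t0 < d" unfolding t0_def using d(1) by auto
        have t0y: "t0 \<le> length y" using t0t ty(1) by linarith
        define zz where "zz = drop t0 y"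
        have lzz: "length zz = length y - t0" unfolding zz_def by simp
        have pzz: "per d zz"
          by (rule per_sub[OF py, of t0]) (use t0t ty(1) in \<open>auto simp: zz_def\<close>)
        have tzz: "take L zz = v"
        proof (rule nth_equalityI)
          show "length (take L zz) = length v" using lzz ty t0t unfolding L_def by simp
          fix k assume "k < length (take L zz)"
          then have k: "k < L" "k < length zz" by auto
          have "take L zz ! k = y ! (t0 + k)" unfolding zz_def using k t0y by simp
          also have "\<dots> = y ! (t + k)"
            by (rule per_mod[OF py]) (use k ty t0t lzz in \<open>auto simp: t0_def mod_add_left_eq\<close>)
          also have "\<dots> = v ! k" using ty k by simp
          finally show "take L zz ! k = v ! k" .
        qed
        have Lzz: "L \<le> length zz" using lzz ty t0t by simp
        have pzw: "packs w zz (length zz div L')" using G[OF pzz Lzz tzz] .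
        have pyw: "packs w y (length zz div L')" using packs_shift[OF pzw, of "take t0 y"] unfolding zz_def by simp
        define m where "m = length zz div L'"
        have "length zz < (m + 1) * L'"
        proof -
          have "length zz = m * L' + length zz mod L'" unfolding m_def by simp
          moreover have "length zz mod L' < L'" using L'1 d(1) by simp
          ultimately show ?thesis by (simp add: algebra_simps)
        qed
        then have "length y \<le> 2 * (m * L')" using lzz t0t d(2) L'L y(2) 4 by (simp add: algebra_simps) linarith
        then have "real (length y) \<le> 2 * (real m * real L')" by (metis of_nat_le_iff of_nat_mult of_nat_numeral)
        then have "C * length y \<le> 1 * (2 * (real m * real L'))" using C1 Cpos
          by (intro mult_mono) auto
        also have "\<dots> \<le> 8 * real k1 * (real m * real L')"
        proof -
          have "(2::real) \<le> 8 * real k1" using k1 by simp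
          from mult_right_mono[OF this, of "real m * real L'"] show ?thesis by simp
        qed
        finally show "\<exists>m. packs w y m \<and> C * length y \<le> 8 * real k1 * (real m * real L')"
          using pyw m_def by blast
      qed
      then show ?thesis by blast
    qed
    then obtain N1 where N1: "\<forall>y\<in>W. N1 \<le> length y \<longrightarrow> (\<exists>m. packs w y m \<and>
         C * length y \<le> 8 * real k1 * (real m * real L'))" by blast
    have "length v - length v div k1 \<le> L'" "L' \<le> length v" "1 \<le> L'"
      using L'low L'L L'1 d(1) unfolding L_def by auto
    then show ?thesis using N1 unfolding w_def by blast
  qed
qed

end

(* ---- part Comb4 ---- *)
lemma packs_le:
  assumes "packs w y m" "w \<noteq> []"
  shows "m * length w \<le> length y"
proof -
  obtain S where S: "S \<subseteq> occs w y" "card S = m" "sep (length w) S"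
    using assms(1) unfolding packs_def by blast
  let ?lw = "length w"
  have lw: "0 < ?lw" using assms(2) by simp
  have inj: "inj_on (\<lambda>i. i div ?lw) S"
  proof (rule inj_onI)
    fix i j assume i: "i \<in> S" and j: "j \<in> S" and e: "i div ?lw = j div ?lw"
    show "i = j"
    proof (rule ccontr)
      assume "i \<noteq> j"
      then consider "i < j" | "j < i" by linarith
      then show False
      proof cases
        case 1
        then have "i + ?lw \<le> j" using S(3) i j unfolding sep_def by auto
        then have "(i + ?lw) div ?lw \<le> j div ?lw" by (rule div_le_mono)
        then show False using e lw by simp
      next
        case 2
        then have "j + ?lw \<le> i" using S(3) i j unfolding sep_def by auto
        then have "(j + ?lw) div ?lw \<le> i div ?lw" by (rule div_le_mono)
        then show False using e lw by simp
      qed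
    qed
  qed
  have img: "(\<lambda>i. i div ?lw) ` S \<subseteq> {..<length y div ?lw}"
  proof
    fix z assume "z \<in> (\<lambda>i. i div ?lw) ` S"
    then obtain i where i: "i \<in> S" "z = i div ?lw" by blast
    have "i + ?lw \<le> length y" using occs_sub[OF S(1) i(1)] by simp
    then have "(i + ?lw) div ?lw \<le> length y div ?lw" by (rule div_le_mono)
    then show "z \<in> {..<length y div ?lw}" using i(2) lw by simp
  qed
  have "m \<le> length y div ?lw" using card_inj_on_le[OF inj img] S(2) by simp
  then have "m * ?lw \<le> (length y div ?lw) * ?lw" by simp
  also have "\<dots> \<le> length y" by (metis div_mult_mod_eq le_add1)
  finally show ?thesis .
qed

context subadd begin

theorem conv: "\<exists>\<Lambda>. \<forall>\<epsilon>>0. \<exists>N. \<forall>x\<in>W. N \<le> length x \<longrightarrow> \<bar>F x / length x - \<Lambda>\<bar> \<le> \<epsilon>"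
proof -
  define S where "S = {r. \<exists>D. \<forall>x\<in>W. F x \<le> r * real (length x) + D}"
  have cS: "c \<in> S" unfolding S_def
  proof (intro CollectI exI[of _ 0] ballI)
    fix x assume "x \<in> W"
    then show "F x \<le> c * real (length x) + 0" using bnd[of x] by simp
  qed
  have up: "r' \<in> S" if rS: "r \<in> S" and rr: "r \<le> r'" for r r'
  proof -
    obtain D where D: "\<forall>x\<in>W. F x \<le> r * real (length x) + D" using rS unfolding S_def by blast
    have "\<forall>x\<in>W. F x \<le> r' * real (length x) + D"
    proof
      fix x assume "x \<in> W"
      have "r * real (length x) \<le> r' * real (length x)" using rr by (intro mult_right_mono) auto
      then show "F x \<le> r' * real (length x) + D" using D \<open>x \<in> W\<close> by fastforce
    qed
    then show ?thesis unfolding S_def by blast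
  qed
  have lowS: "- c \<le> r" if rS: "r \<in> S" for r
  proof (rule ccontr)
    assume "\<not> ?thesis"
    then have rc: "0 < - c - r" by simp
    obtain D where D: "\<forall>x\<in>W. F x \<le> r * real (length x) + D" using rS unfolding S_def by blast
    define n where "n = nat \<lceil>(\<bar>D\<bar> + 1) / (- c - r)\<rceil>"
    obtain x where x: "x \<in> W" "n \<le> length x" using long by blast
    have "(\<bar>D\<bar> + 1) / (- c - r) \<le> real n" unfolding n_def by linarith
    also have "\<dots> \<le> real (length x)" using x(2) by simp
    finally have "(\<bar>D\<bar> + 1) \<le> (- c - r) * real (length x)" using rc by (simp add: field_simps)
    moreover have "- c * real (length x) \<le> F x" using bnd[OF x(1)] by (simp add: abs_le_iff)
    moreover have "F x \<le> r * real (length x) + D" using D x(1) by blast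
    ultimately show False by (simp add: algebra_simps)
  qed
  have bdd: "bdd_below S" unfolding bdd_below_def using lowS by blast
  have Sne: "S \<noteq> {}" using cS by blast
  define \<Lambda> where "\<Lambda> = Inf S"
  have \<Lambda>c: "\<Lambda> \<le> c" unfolding \<Lambda>_def using cInf_lower[OF cS bdd] .
  have \<Lambda>low: "- c \<le> \<Lambda>" unfolding \<Lambda>_def using cInf_greatest[OF Sne] lowS by blast
  have \<Lambda>S: "\<exists>D. 0 \<le> D \<and> (\<forall>x\<in>W. F x \<le> (\<Lambda> + \<epsilon>) * real (length x) + D)" if ep0: "0 < \<epsilon>" for \<epsilon>
  proof -
    have "Inf S < \<Lambda> + \<epsilon>" using ep0 unfolding \<Lambda>_def by simp
    then obtain r where r: "r \<in> S" "r < \<Lambda> + \<epsilon>" using cInf_less_iff[OF Sne bdd] by blast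
    have "\<Lambda> + \<epsilon> \<in> S" using up[OF r(1)] r(2) by simp
    then obtain D where D: "\<forall>x\<in>W. F x \<le> (\<Lambda> + \<epsilon>) * real (length x) + D" unfolding S_def by blast
    show ?thesis using D by (intro exI[of _ "max D 0"]) fastforce
  qed
  have upper: "\<exists>N. \<forall>x\<in>W. N \<le> length x \<longrightarrow> F x / length x \<le> \<Lambda> + \<epsilon>" if ep0: "0 < \<epsilon>" for \<epsilon>
  proof -
    obtain D where D: "0 \<le> D" "\<forall>x\<in>W. F x \<le> (\<Lambda> + \<epsilon>/2) * real (length x) + D"
      using \<Lambda>S[of "\<epsilon>/2"] ep0 by auto
    define N where "N = nat \<lceil>2 * D / \<epsilon>\<rceil> + 1"
    have "\<forall>x\<in>W. N \<le> length x \<longrightarrow> F x / length x \<le> \<Lambda> + \<epsilon>"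
    proof (intro ballI impI)
      fix x assume x: "x \<in> W" "N \<le> length x"
      have lpos: "0 < real (length x)" using nonempty[OF x(1)] by simp
      have "2 * D / \<epsilon> \<le> real (length x)" using x(2) unfolding N_def by linarith
      then have "2 * D \<le> \<epsilon> * real (length x)" using ep0 by (simp add: field_simps)
      then have "F x \<le> (\<Lambda> + \<epsilon>) * real (length x)" using D(2) x(1) by (fastforce simp: algebra_simps)
      then show "F x / length x \<le> \<Lambda> + \<epsilon>" using lpos by (simp add: divide_le_eq)
    qed
    then show ?thesis by blast
  qed
  have lower: "\<exists>N. \<forall>x\<in>W. N \<le> length x \<longrightarrow> (\<Lambda> - \<delta>) * length x \<le> F x" if dpos: "0 < \<delta>" for \<delta>
  proof (rule ccontr)
    assume "\<not> ?thesis"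
    then have bad: "\<And>N. \<exists>v\<in>W. N \<le> length v \<and> F v < (\<Lambda> - \<delta>) * length v"
      by (meson not_le)
    define k1 where "k1 = nat \<lceil>8 * c / \<delta>\<rceil> + 4"
    have k14: "4 \<le> k1" unfolding k1_def by simp
    have k1c: "8 * c \<le> \<delta> * real k1"
    proof -
      have "8 * c / \<delta> \<le> real k1" unfolding k1_def by linarith
      then show ?thesis using dpos by (simp add: field_simps)
    qed
    define \<theta> where "\<theta> = C / (8 * real k1)"
    have \<theta>pos: "0 < \<theta>" unfolding \<theta>_def using Cpos k14 by simp
    define \<epsilon> where "\<epsilon> = \<theta> * \<delta> / 8"
    have \<epsilon>pos: "0 < \<epsilon>" unfolding \<epsilon>_def using \<theta>pos dpos by simp
    obtain D where D: "0 \<le> D" "\<forall>x\<in>W. F x \<le> (\<Lambda> + \<epsilon>) * real (length x) + D"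
      using \<Lambda>S[OF \<epsilon>pos] by blast
    define L0 where "L0 = nat \<lceil>16 * D / (\<theta> * \<delta>)\<rceil> + 1"
    have L0D: "16 * D \<le> \<theta> * \<delta> * real L0"
    proof -
      have "16 * D / (\<theta> * \<delta>) \<le> real L0" unfolding L0_def by linarith
      then show ?thesis using \<theta>pos dpos by (simp add: field_simps)
    qed
    obtain v where v: "v \<in> W" "L0 \<le> length v" "F v < (\<Lambda> - \<delta>) * length v" using bad by blast
    define L where "L = length v"
    obtain L' N1 where L': "L - L div k1 \<le> L'" "L' \<le> L" "1 \<le> L'"
      and N1: "\<forall>y\<in>W. N1 \<le> length y \<longrightarrow> (\<exists>m. packs (take L' v) y m \<and>
         C * length y \<le> 8 * real k1 * (real m * real L'))"
      using key[OF v(1) k14] unfolding L_def by blast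
    define w where "w = take L' v"
    have lw: "length w = L'" unfolding w_def using L'(2) L_def by simp
    have wne: "w \<noteq> []" using lw L'(3) by auto
    define e where "e = real L - real L'"
    have eL: "real L = real L' + e" unfolding e_def by simp
    have e0: "0 \<le> e" unfolding e_def using L'(2) by simp
    have ek: "e * real k1 \<le> real L"
    proof -
      have "L - L' \<le> L div k1" using L'(1) by linarith
      then have "(L - L') * k1 \<le> (L div k1) * k1" by simp
      also have "\<dots> \<le> L" by (metis div_mult_mod_eq le_add1)
      finally have "real ((L - L') * k1) \<le> real L" by linarith
      then show ?thesis unfolding e_def using L'(2) by (simp add: of_nat_diff)
    qed
    have Fdrop: "F (drop L' v) \<le> c * e"
    proof (cases "drop L' v = []")
      case True then show ?thesis using F0 cpos e0 by simp
    next
      case False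
      then have "drop L' v \<in> W" using drop_W[of v L'] v(1) by auto
      then have "F (drop L' v) \<le> c * real (length (drop L' v))" using bnd by fastforce
      then show ?thesis unfolding e_def L_def using L'(2) L_def by (simp add: of_nat_diff)
    qed
    have Fw: "F w \<le> (\<Lambda> - \<delta> / 2) * real L'"
    proof -
      have "F w \<le> F v + F (drop L' v)" using mono[of w "drop L' v"] unfolding w_def by simp
      also have "\<dots> \<le> (\<Lambda> - \<delta>) * real L + c * e" using v(3) Fdrop unfolding L_def by simp
      finally have f1: "F w \<le> (\<Lambda> - \<delta>) * real L + c * e" .
      have A: "(\<Lambda> - \<delta> + c) * e \<le> (2 * c) * e" using \<Lambda>c dpos e0 by (intro mult_right_mono) auto
      have B: "8 * (c * e) \<le> \<delta> * real L"
      proof -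
        have "8 * c * e \<le> \<delta> * real k1 * e" using k1c e0 by (intro mult_right_mono) auto
        also have "\<dots> = \<delta> * (e * real k1)" by simp
        also have "\<dots> \<le> \<delta> * real L" using ek dpos by (intro mult_left_mono) auto
        finally show ?thesis by simp
      qed
      have C': "\<delta> * real L \<le> 2 * (\<delta> * real L')"
      proof -
        have "4 * e \<le> e * real k1" using k14 e0 by (simp add: mult_left_mono mult.commute)
        then have "real L \<le> 2 * real L'" using ek eL by linarith
        then show ?thesis using dpos by (simp add: mult_left_mono)
      qed
      have ex: "(\<Lambda> - \<delta>) * real L = (\<Lambda> - \<delta> / 2) * real L' - \<delta> * real L' / 2 + (\<Lambda> - \<delta> + c) * e - c * e"
        using eL by (simp add: algebra_simps)
      show ?thesis using f1 A B C' ex by linarith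
    qed
    have Lpos: "real L0 \<le> real L" using v(2) unfolding L_def by simp
    have L'L0: "real L \<le> 2 * real L'"
    proof -
      have "4 * e \<le> e * real k1" using k14 e0 by (simp add: mult_left_mono mult.commute)
      then show ?thesis using ek eL by linarith
    qed
    have D8: "8 * D \<le> \<theta> * \<delta> * real L'"
    proof -
      have "\<theta> * \<delta> * real L0 \<le> \<theta> * \<delta> * real L" using Lpos \<theta>pos dpos by (intro mult_left_mono) auto
      also have "\<dots> \<le> \<theta> * \<delta> * (2 * real L')" using L'L0 \<theta>pos dpos by (intro mult_left_mono) auto
      finally show ?thesis using L0D by simp
    qed
    define r where "r = \<Lambda> - \<theta> * \<delta> / 4"
    have bigy: "F y \<le> r * real (length y) + D" if y: "y \<in> W" "N1 \<le> length y" for y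
    proof -
      obtain m where m: "packs w y m" "C * length y \<le> 8 * real k1 * (real m * real L')"
        using N1 y unfolding w_def by blast
      define P where "P = real m * real L'"
      define Y where "Y = real (length y)"
      have thP: "\<theta> * Y \<le> P"
      proof -
        have "C * Y \<le> 8 * real k1 * P" using m(2) unfolding P_def Y_def by simp
        then show ?thesis unfolding \<theta>_def using k14 by (simp add: field_simps)
      qed
      have PY: "P \<le> Y" using packs_le[OF m(1) wne] lw unfolding P_def Y_def
        by (metis of_nat_le_iff of_nat_mult)
      have Fy: "F y \<le> real m * F w + (\<Lambda> + \<epsilon>) * (Y - P) + (real m + 1) * D"
        using packs_F[OF m(1) _ D(2) D(1)] y(1) lw unfolding P_def Y_def by simp
      have mF: "real m * F w \<le> (\<Lambda> - \<delta> / 2) * P"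
        using mult_left_mono[OF Fw, of "real m"] unfolding P_def by (simp add: algebra_simps)
      have mD: "8 * (real m * D) \<le> \<theta> * \<delta> * P"
        using mult_left_mono[OF D8, of "real m"] unfolding P_def by (simp add: algebra_simps)
      have dP: "\<delta> * (\<theta> * Y) \<le> \<delta> * P" using thP dpos by (intro mult_left_mono) auto
      have eP: "0 \<le> \<epsilon> * P" using \<epsilon>pos unfolding P_def by simp
      have tdP: "\<theta> * \<delta> * P \<le> \<theta> * \<delta> * Y" using PY \<theta>pos dpos by (intro mult_left_mono) auto
      have "F y \<le> (\<Lambda> - \<delta> / 2) * P + (\<Lambda> + \<epsilon>) * (Y - P) + real m * D + D"
        using Fy mF by (simp add: algebra_simps)
      also have "\<dots> = \<Lambda> * Y + \<epsilon> * Y - \<delta> * P / 2 - \<epsilon> * P + real m * D + D"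
        by (simp add: algebra_simps)
      also have "\<dots> \<le> r * Y + D"
        unfolding r_def \<epsilon>_def using dP eP tdP mD unfolding \<epsilon>_def by (simp add: algebra_simps)
      finally show ?thesis unfolding Y_def .
    qed
    define D1 where "D1 = D + \<bar>c - r\<bar> * real N1"
    have "\<forall>x\<in>W. F x \<le> r * real (length x) + D1"
    proof
      fix x assume x: "x \<in> W"
      show "F x \<le> r * real (length x) + D1"
      proof (cases "N1 \<le> length x")
        case True
        have "0 \<le> \<bar>c - r\<bar> * real N1" by simp
        then show ?thesis using bigy[OF x True] unfolding D1_def by linarith
      next
        case False
        have "F x \<le> c * real (length x)" using bnd[OF x] by simp
        also have "\<dots> = r * real (length x) + (c - r) * real (length x)" by (simp add: algebra_simps)
        also have "(c - r) * real (length x) \<le> \<bar>c - r\<bar> * real N1"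
        proof -
          have "(c - r) * real (length x) \<le> \<bar>c - r\<bar> * real (length x)" by (intro mult_right_mono) auto
          also have "\<dots> \<le> \<bar>c - r\<bar> * real N1" using False by (intro mult_left_mono) auto
          finally show ?thesis .
        qed
        finally show ?thesis unfolding D1_def using D(1) by simp
      qed
    qed
    then have "r \<in> S" unfolding S_def by blast
    then have "\<Lambda> \<le> r" unfolding \<Lambda>_def using cInf_lower[OF _ bdd] by blast
    moreover have "r < \<Lambda>" unfolding r_def using \<theta>pos dpos by simp
    ultimately show False by simp
  qed
  show ?thesis
  proof (intro exI[of _ \<Lambda>] allI impI)
    fix \<epsilon> :: real assume ep: "0 < \<epsilon>"
    obtain N1 where N1: "\<forall>x\<in>W. N1 \<le> length x \<longrightarrow> F x / length x \<le> \<Lambda> + \<epsilon>" using upper[OF ep] by blast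
    obtain N2 where N2: "\<forall>x\<in>W. N2 \<le> length x \<longrightarrow> (\<Lambda> - \<epsilon>) * length x \<le> F x" using lower[OF ep] by blast
    have "\<forall>x\<in>W. max N1 N2 \<le> length x \<longrightarrow> \<bar>F x / length x - \<Lambda>\<bar> \<le> \<epsilon>"
    proof (intro ballI impI)
      fix x assume x: "x \<in> W" "max N1 N2 \<le> length x"
      have lpos: "0 < real (length x)" using nonempty[OF x(1)] by simp
      have a: "F x / length x \<le> \<Lambda> + \<epsilon>" using N1 x by auto
      have "(\<Lambda> - \<epsilon>) * length x \<le> F x" using N2 x by auto
      then have b: "\<Lambda> - \<epsilon> \<le> F x / length x" using lpos by (simp add: le_divide_eq)
      show "\<bar>F x / length x - \<Lambda>\<bar> \<le> \<epsilon>" using a b by linarith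
    qed
    then show "\<exists>N. \<forall>x\<in>W. N \<le> length x \<longrightarrow> \<bar>F x / real (length x) - \<Lambda>\<bar> \<le> \<epsilon>" by blast
  qed
qed

end

(* ---- part Mat ---- *)
definition T :: "real \<Rightarrow> real \<Rightarrow> real^2^2" where "T E a = transfer E (\<lambda>_. a)"

primrec Mw :: "real \<Rightarrow> real list \<Rightarrow> real^2^2" where
  "Mw E [] = mat 1"
| "Mw E (a # xs) = Mw E xs ** T E a"

definition adj :: "real^2^2 \<Rightarrow> real^2^2" where
  "adj M = (\<chi> i j. if i = 1 \<and> j = 1 then M$2$2 else if i = 1 \<and> j = 2 then - M$1$2
     else if i = 2 \<and> j = 1 then - M$2$1 else M$1$1)"

lemma two_ne: "(1::2) \<noteq> 2" by simp

lemma T_comp: "T E a $ 1 $ 1 = E - a" "T E a $ 1 $ 2 = -1" "T E a $ 2 $ 1 = 1" "T E a $ 2 $ 2 = 0"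
  unfolding T_def transfer_def by simp_all

lemma adj_comp: "adj M $ 1 $ 1 = M$2$2" "adj M $ 1 $ 2 = - M$1$2" "adj M $ 2 $ 1 = - M$2$1" "adj M $ 2 $ 2 = M$1$1"
  unfolding adj_def by simp_all

lemma mat2_eqI: "A $ 1 $ 1 = B $ 1 $ 1 \<Longrightarrow> A $ 1 $ 2 = B $ 1 $ 2 \<Longrightarrow> A $ 2 $ 1 = B $ 2 $ 1 \<Longrightarrow> A $ 2 $ 2 = B $ 2 $ 2 \<Longrightarrow> A = (B::real^2^2)"
  by (simp add: vec_eq_iff forall_2)

lemma mult2: "(A ** B) $ i $ j = A $ i $ 1 * B $ 1 $ j + A $ i $ 2 * B $ 2 $ j" for A B :: "real^2^2"
  by (simp add: matrix_matrix_mult_def sum_2)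

lemma mat1_comp: "(mat 1 :: real^2^2) $ 1 $ 1 = 1" "(mat 1 :: real^2^2) $ 1 $ 2 = 0" "(mat 1 :: real^2^2) $ 2 $ 1 = 0" "(mat 1 :: real^2^2) $ 2 $ 2 = 1"
  by (simp_all add: mat_def)

lemma adj_left: "det M = 1 \<Longrightarrow> adj M ** M = mat 1"
  by (rule mat2_eqI) (simp_all add: mult2 adj_comp mat1_comp det_2 algebra_simps)

lemma adj_right: "det M = 1 \<Longrightarrow> M ** adj M = mat 1"
  by (rule mat2_eqI) (simp_all add: mult2 adj_comp mat1_comp det_2 algebra_simps)

lemma adj_adj: "adj (adj M) = M"
  by (rule mat2_eqI) (simp_all add: adj_comp)

lemma det_T: "det (T E a) = 1"
  by (simp add: det_2 T_comp)

lemma Mw_append: "Mw E (xs @ ys) = Mw E ys ** Mw E xs"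
  by (induction xs) (simp_all add: matrix_mul_assoc)

lemma det_Mw: "det (Mw E xs) = 1"
  by (induction xs) (simp_all add: det_mul det_T)

lemma left_inv_unique: "det M = 1 \<Longrightarrow> N ** M = mat 1 \<Longrightarrow> N = adj M"
proof -
  assume d: "det M = 1" and n: "N ** M = mat 1"
  have "N = N ** (M ** adj M)" using adj_right[OF d] by simp
  also have "\<dots> = (N ** M) ** adj M" by (simp add: matrix_mul_assoc)
  also have "\<dots> = adj M" using n by simp
  finally show ?thesis .
qed

lemma matrix_inv_adj: "det M = 1 \<Longrightarrow> matrix_inv M = adj M"
proof -
  assume d: "det M = 1"
  have ex: "\<exists>A'. M ** A' = mat 1 \<and> A' ** M = mat 1" using adj_left[OF d] adj_right[OF d] by blast
  have "M ** matrix_inv M = mat 1 \<and> matrix_inv M ** M = mat 1"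
    unfolding matrix_inv_def by (rule someI_ex[OF ex])
  then show ?thesis using left_inv_unique[OF d] by blast
qed

abbreviation on :: "real^2^2 \<Rightarrow> real" where "on M \<equiv> onorm ((*v) M)"

lemma on_mult: "on (A ** B) \<le> on A * on B"
proof -
  have "(*v) (A ** B) = (*v) A \<circ> (*v) B" by (rule ext) (simp add: matrix_vector_mul_assoc)
  then show ?thesis using onorm_compose[OF matrix_vector_mul_bounded_linear matrix_vector_mul_bounded_linear] by simp
qed

lemma on_one: "on (mat 1) = 1"
proof -
  have "(*v) (mat 1 :: real^2^2) = (\<lambda>x. x)" by (rule ext) simp
  then show ?thesis using onorm_id by simp
qed

definition sabs :: "real^2^2 \<Rightarrow> real" where
  "sabs M = \<bar>M$1$1\<bar> + \<bar>M$1$2\<bar> + \<bar>M$2$1\<bar> + \<bar>M$2$2\<bar>"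

lemma on_le_sabs: "on M \<le> sabs M"
  using onorm_le_matrix_component_sum[of M] unfolding sabs_def by (simp add: sum_2)

lemma sabs_le_on: "sabs M \<le> 4 * on M"
  using matrix_component_le_onorm[of M 1 1] matrix_component_le_onorm[of M 1 2]
    matrix_component_le_onorm[of M 2 1] matrix_component_le_onorm[of M 2 2]
  unfolding sabs_def by linarith

lemma sabs_adj: "sabs (adj M) = sabs M"
  unfolding sabs_def adj_comp by simp

lemma on_adj: "on (adj M) \<le> 4 * on M"
  using on_le_sabs[of "adj M"] sabs_adj[of M] sabs_le_on[of M] by linarith

lemma on_nonneg: "0 \<le> on M"
  by (rule onorm_pos_le[OF matrix_vector_mul_bounded_linear])

lemma on_det1: "det M = 1 \<Longrightarrow> 1 / 2 \<le> on M"
proof -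
  assume d: "det M = 1"
  have "1 = on (adj M ** M)" using adj_left[OF d] on_one by simp
  also have "\<dots> \<le> on (adj M) * on M" by (rule on_mult)
  also have "\<dots> \<le> 4 * on M * on M" using on_adj[of M] on_nonneg[of M] by (intro mult_right_mono) auto
  finally have h: "1 \<le> 4 * (on M * on M)" by simp
  show ?thesis
  proof (rule ccontr)
    assume "\<not> ?thesis"
    then have "on M < 1/2" by simp
    then have "on M * on M < 1/2 * (1/2)" using on_nonneg[of M] by (intro mult_strict_mono') auto
    then show False using h by simp
  qed
qed

lemma on_T: "on (T E a) \<le> \<bar>E\<bar> + \<bar>a\<bar> + 2"
proof -
  have "on (T E a) \<le> sabs (T E a)" by (rule on_le_sabs)
  also have "\<dots> = \<bar>E - a\<bar> + 2" unfolding sabs_def T_comp by simp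
  also have "\<dots> \<le> \<bar>E\<bar> + \<bar>a\<bar> + 2" by simp
  finally show ?thesis .
qed

lemma on_Mw_bound:
  assumes "\<forall>a\<in>set xs. \<bar>a\<bar> \<le> B0" "0 \<le> B0"
  shows "on (Mw E xs) \<le> (\<bar>E\<bar> + B0 + 2) ^ length xs"
  using assms(1)
proof (induction xs)
  case Nil then show ?case by (simp add: onorm_id_le)
next
  case (Cons a xs)
  have "on (Mw E (a # xs)) \<le> on (Mw E xs) * on (T E a)" using on_mult by simp
  also have "\<dots> \<le> (\<bar>E\<bar> + B0 + 2) ^ length xs * (\<bar>E\<bar> + B0 + 2)"
  proof (rule mult_mono)
    show "on (Mw E xs) \<le> (\<bar>E\<bar> + B0 + 2) ^ length xs" using Cons by simp
    show "on (T E a) \<le> \<bar>E\<bar> + B0 + 2" using on_T[of E a] Cons.prems by simp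
  qed (use on_nonneg assms(2) in auto)
  finally show ?case by (simp add: mult.commute)
qed

(* ---- part Final ---- *)
definition Fm :: "real \<Rightarrow> real list \<Rightarrow> real" where "Fm E xs = ln (on (Mw E xs))"
definition Fp :: "real \<Rightarrow> real list \<Rightarrow> real" where "Fp E xs = (if xs = [] then 0 else Fm E xs + ln 4)"

lemma on_Mw_pos: "1/2 \<le> on (Mw E xs)"
  using on_det1[OF det_Mw] .

lemma on_Mw_gt0: "0 < on (Mw E xs)"
  using on_Mw_pos[of E xs] by linarith

lemma ln4: "ln (4::real) = 2 * ln 2"
proof -
  have "(4::real) = 2 ^ 2" by simp
  then show ?thesis using ln_realpow[of "2::real" 2] by simp
qed

lemma Fm_lower: "- ln 2 \<le> Fm E xs"
proof -
  have "ln (1/2) \<le> ln (on (Mw E xs))" using on_Mw_pos[of E xs] by (subst ln_le_cancel_iff) auto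
  then show ?thesis unfolding Fm_def by (simp add: ln_div)
qed

lemma Fm_sub: "Fm E (x @ y) \<le> Fm E x + Fm E y"
proof -
  have "on (Mw E (x @ y)) \<le> on (Mw E y) * on (Mw E x)" unfolding Mw_append by (rule on_mult)
  then have "ln (on (Mw E (x @ y))) \<le> ln (on (Mw E y) * on (Mw E x))"
    using on_Mw_gt0 by (subst ln_le_cancel_iff) (auto intro: mult_pos_pos)
  also have "\<dots> = ln (on (Mw E y)) + ln (on (Mw E x))" by (rule ln_mult_pos[OF on_Mw_gt0 on_Mw_gt0])
  finally show ?thesis unfolding Fm_def by simp
qed

lemma Fm_mono: "Fm E x \<le> Fm E (x @ y) + Fm E y + ln 4"
proof -
  have "Mw E x = adj (Mw E y) ** Mw E (x @ y)"
    unfolding Mw_append by (simp add: matrix_mul_assoc adj_left[OF det_Mw])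
  then have "on (Mw E x) \<le> on (adj (Mw E y)) * on (Mw E (x @ y))" using on_mult by simp
  also have "\<dots> \<le> (4 * on (Mw E y)) * on (Mw E (x @ y))"
    using on_adj on_nonneg by (intro mult_right_mono) auto
  finally have h: "on (Mw E x) \<le> 4 * on (Mw E y) * on (Mw E (x @ y))" .
  then have "ln (on (Mw E x)) \<le> ln (4 * on (Mw E y) * on (Mw E (x @ y)))"
    using on_Mw_gt0 by (subst ln_le_cancel_iff) (auto intro: mult_pos_pos)
  also have "\<dots> = ln (4 * on (Mw E y)) + ln (on (Mw E (x @ y)))"
    using on_Mw_gt0 by (intro ln_mult_pos) auto
  also have "ln (4 * on (Mw E y)) = ln 4 + ln (on (Mw E y))"
    using on_Mw_gt0 by (intro ln_mult_pos) auto
  finally show ?thesis unfolding Fm_def by simp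
qed

lemma Fp_nonneg: "0 \<le> Fp E xs"
proof -
  have "0 < ln (2::real)" by simp
  then have "0 \<le> Fm E xs + ln 4" using Fm_lower[of E xs] ln4 by linarith
  then show ?thesis unfolding Fp_def by simp
qed

lemma Fp_sub: "Fp E (x @ y) \<le> Fp E x + Fp E y"
proof -
  have "0 < ln (4::real)" by simp
  then have "Fm E (x @ y) + ln 4 \<le> (Fm E x + ln 4) + (Fm E y + ln 4)" using Fm_sub[of E x y] by linarith
  then show ?thesis unfolding Fp_def by auto
qed

lemma Fp_mono: "Fp E x \<le> Fp E (x @ y) + Fp E y"
proof (cases "x = []")
  case True
  have "Fp E [] = 0" by (simp add: Fp_def)
  then show ?thesis using Fp_nonneg[of E y] True by simp
next
  case False
  show ?thesis
  proof (cases "y = []")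
    case True then show ?thesis by (simp add: Fp_def)
  next
    case False
    then show ?thesis using \<open>x \<noteq> []\<close> Fm_mono[of E x y] unfolding Fp_def by auto
  qed
qed

lemma length_word_at[simp]: "length (word_at \<omega> m n) = n"
  unfolding word_at_def by simp

lemma nth_word_at[simp]: "j < n \<Longrightarrow> word_at \<omega> m n ! j = \<omega> (m + int j)"
  unfolding word_at_def by simp

lemma word_at_Suc: "word_at \<omega> m (Suc n) = word_at \<omega> m n @ [\<omega> (m + int n)]"
  unfolding word_at_def by simp

lemma word_at_Cons: "word_at \<omega> m (Suc n) = \<omega> m # word_at \<omega> (m + 1) n"
  by (rule nth_equalityI) (auto simp: nth_Cons add.assoc split: nat.splits)

lemma transfer_shiftpow: "transfer E (shiftpow k \<omega>) = T E (\<omega> (1 + k))"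
  unfolding T_def transfer_def shiftpow_def by (simp add: add.commute)

lemma cocycle_pos_eq: "cocycle_pos E n \<omega> = Mw E (word_at \<omega> 1 n)"
proof (induction n)
  case 0 then show ?case by (simp add: word_at_def)
next
  case (Suc n)
  show ?case using Suc by (simp add: word_at_Suc Mw_append transfer_shiftpow)
qed

lemma cocycle_neg_left: "cocycle_neg E k \<omega> ** Mw E (word_at \<omega> (1 - int k) k) = mat 1"
proof (induction k)
  case 0 then show ?case by (simp add: word_at_def)
next
  case (Suc k)
  have w: "word_at \<omega> (1 - int (Suc k)) (Suc k) = \<omega> (- int k) # word_at \<omega> (1 - int k) k"
    by (simp add: word_at_Cons)
  have t: "transfer E (shiftpow (- int (Suc k)) \<omega>) = T E (\<omega> (- int k))"
    by (simp add: transfer_shiftpow)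
  have "cocycle_neg E (Suc k) \<omega> ** Mw E (word_at \<omega> (1 - int (Suc k)) (Suc k))
      = adj (T E (\<omega> (- int k))) ** ((cocycle_neg E k \<omega> ** Mw E (word_at \<omega> (1 - int k) k)) ** T E (\<omega> (- int k)))"
    unfolding w by (simp add: transfer_shiftpow matrix_inv_adj[OF det_T] matrix_mul_assoc)
  also have "\<dots> = mat 1" using Suc by (simp add: adj_left[OF det_T])
  finally show ?case .
qed

lemma cocycle_neg_eq: "cocycle_neg E k \<omega> = adj (Mw E (word_at \<omega> (1 - int k) k))"
  by (rule left_inv_unique[OF det_Mw cocycle_neg_left])

lemma approx:
  fixes a b k \<Lambda> e :: real
  assumes "\<bar>a / k - \<Lambda>\<bar> \<le> e / 2" "\<bar>b - a\<bar> \<le> 2 * ln 4" "4 * ln 4 / e < k" "0 < e" "0 < k"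
  shows "\<bar>b / k - \<Lambda>\<bar> < e"
proof -
  have "4 * ln 4 < e * k" using assms(3,4) by (simp add: field_simps)
  then have "2 * ln 4 / k < e / 2" using assms(5) by (simp add: field_simps)
  moreover have "\<bar>b / k - a / k\<bar> = \<bar>b - a\<bar> / k" using assms(5) by (simp add: diff_divide_distrib[symmetric])
  moreover have "\<bar>b - a\<bar> / k \<le> 2 * ln 4 / k" using assms(2,5) by (simp add: divide_right_mono)
  ultimately show ?thesis using assms(1) by linarith
qed

lemma subwords_take_drop:
  assumes "x \<in> subwords \<Omega>"
  shows "take n (drop i x) \<in> subwords \<Omega> \<or> take n (drop i x) = []"
proof -
  obtain \<omega> m k where x: "x = word_at \<omega> m k" "\<omega> \<in> \<Omega>" "1 \<le> k"
    using assms unfolding subwords_def by blast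
  define r where "r = min n (k - i)"
  have eq: "take n (drop i x) = word_at \<omega> (m + int i) r"
    by (rule nth_equalityI) (auto simp: x(1) r_def add.assoc)
  show ?thesis
  proof (cases "r = 0")
    case True then show ?thesis using eq by (simp add: word_at_def)
  next
    case False
    then have "word_at \<omega> (m + int i) r \<in> subwords \<Omega>" unfolding subwords_def using x(2) by fastforce
    then show ?thesis using eq by simp
  qed
qed

theorem theorem2p5:
  fixes A :: "real set" and \<Omega> :: "(int \<Rightarrow> real) set"
  assumes "finite A" and "subshift A \<Omega>" and "PW \<Omega>"
  shows "\<forall>E::real. uniform_cocycle \<Omega> E"
proof
  fix E :: real
  show "uniform_cocycle \<Omega> E"
  proof (cases "\<Omega> = {}")
    case True
    then show ?thesis unfolding uniform_cocycle_def uniform_limit_iff by simp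
  next
    case False
    then obtain \<omega>0 where \<omega>0: "\<omega>0 \<in> \<Omega>" by blast
    define W where "W = subwords \<Omega>"
    obtain C where C: "0 < C" and PWC: "\<forall>v\<in>W. \<forall>\<epsilon>>0. \<exists>N. \<forall>x\<in>W. length x \<ge> N \<longrightarrow>
      real (occurrences v x) / real (length x) * real (length v) \<ge> C - \<epsilon>"
      using assms(3) unfolding PW_def W_def by blast
    define C1 where "C1 = min C 1"
    have C1pos: "0 < C1" unfolding C1_def using C by simp
    define MA where "MA = (\<Sum>a\<in>A. \<bar>a\<bar>)"
    have MA: "\<bar>a\<bar> \<le> MA" if "a \<in> A" for a
      unfolding MA_def using member_le_sum[of a A "\<lambda>a. \<bar>a\<bar>"] that assms(1) by simp
    have MA0: "0 \<le> MA" unfolding MA_def by (simp add: sum_nonneg)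
    define Bb where "Bb = \<bar>E\<bar> + MA + 2"
    have Bb2: "2 \<le> Bb" unfolding Bb_def using MA0 by simp
    define c where "c = ln Bb + ln 4"
    have lnBb: "0 < ln Bb" using Bb2 by simp
    have ln4pos: "0 < ln (4::real)" by simp
    have letters: "\<forall>a\<in>set x. \<bar>a\<bar> \<le> MA" if xW: "x \<in> W" for x
    proof -
      obtain \<omega> m k where x: "x = word_at \<omega> m k" "\<omega> \<in> \<Omega>"
        using xW unfolding W_def subwords_def by blast
      have "\<omega> n \<in> A" for n using x(2) assms(2) unfolding subshift_def by blast
      then show ?thesis using MA unfolding x(1) word_at_def by auto
    qed
    interpret S: subadd W "Fp E" c C1
    proof
      show "take n (drop i x) \<in> W \<or> take n (drop i x) = []" if "x \<in> W" for x n i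
        using subwords_take_drop that unfolding W_def by blast
      show "x \<noteq> []" if "x \<in> W" for x
        using that unfolding W_def subwords_def by (auto simp: word_at_def)
      show "\<exists>x\<in>W. n \<le> length x" for n
      proof
        show "word_at \<omega>0 0 (max n 1) \<in> W" unfolding W_def subwords_def using \<omega>0 by fastforce
      qed simp
      show "Fp E (x @ y) \<le> Fp E x + Fp E y" for x y by (rule Fp_sub)
      show "Fp E x \<le> Fp E (x @ y) + Fp E y" for x y by (rule Fp_mono)
      show "Fp E [] = 0" by (simp add: Fp_def)
      show "\<bar>Fp E x\<bar> \<le> c * real (length x)" if x: "x \<in> W" for x
      proof -
        have xne: "x \<noteq> []" using x unfolding W_def subwords_def by (auto simp: word_at_def)
        have "on (Mw E x) \<le> Bb ^ length x" unfolding Bb_def using on_Mw_bound[OF letters[OF x] MA0] .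
        then have "ln (on (Mw E x)) \<le> ln (Bb ^ length x)"
          using on_Mw_gt0 Bb2 by (subst ln_le_cancel_iff) auto
        also have "\<dots> = real (length x) * ln Bb" using Bb2 by (simp add: ln_realpow)
        finally have "Fm E x \<le> real (length x) * ln Bb" unfolding Fm_def .
        moreover have "1 \<le> real (length x)" using xne by (cases x) auto
        ultimately have "Fp E x \<le> c * real (length x)"
        proof -
          have "ln 4 \<le> ln 4 * real (length x)" using \<open>1 \<le> real (length x)\<close> ln4pos by simp
          moreover have "Fp E x = Fm E x + ln 4" using xne by (simp add: Fp_def)
          moreover have "c * real (length x) = real (length x) * ln Bb + ln 4 * real (length x)"
            unfolding c_def by (simp add: algebra_simps)
          ultimately show ?thesis using \<open>Fm E x \<le> real (length x) * ln Bb\<close> by linarith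
        qed
        then show ?thesis using Fp_nonneg[of E x] by simp
      qed
      show "0 < c" unfolding c_def using lnBb ln4pos by linarith
      show "0 < C1" by (rule C1pos)
      show "C1 \<le> 1" unfolding C1_def by simp
      show "\<exists>N. \<forall>x\<in>W. N \<le> length x \<longrightarrow> C1 * real (length x) \<le> 2 * real (card (occs v x)) * real (length v)"
        if v: "v \<in> W" for v
      proof -
        have ep: "0 < C - C1 / 2" unfolding C1_def using C by simp
        obtain N where N: "\<forall>x\<in>W. length x \<ge> N \<longrightarrow>
            real (occurrences v x) / real (length x) * real (length v) \<ge> C - (C - C1 / 2)"
          using PWC v ep by blast
        have "\<forall>x\<in>W. N \<le> length x \<longrightarrow> C1 * real (length x) \<le> 2 * real (card (occs v x)) * real (length v)"
        proof (intro ballI impI)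
          fix x assume x: "x \<in> W" "N \<le> length x"
          have lx: "0 < real (length x)" using x(1) unfolding W_def subwords_def by (auto simp: word_at_def)
          have "C1 / 2 \<le> real (card (occs v x)) / real (length x) * real (length v)"
            using N x occurrences_occs[of v x] by auto
          then have "C1 / 2 * real (length x) \<le> real (card (occs v x)) * real (length v)"
            using lx by (simp add: field_simps)
          then show "C1 * real (length x) \<le> 2 * real (card (occs v x)) * real (length v)" by simp
        qed
        then show ?thesis by blast
      qed
    qed
    obtain \<Lambda> where \<Lambda>: "\<forall>\<epsilon>>0. \<exists>N. \<forall>x\<in>W. N \<le> length x \<longrightarrow> \<bar>Fp E x / length x - \<Lambda>\<bar> \<le> \<epsilon>"
      using S.conv by blast
    show ?thesis
      unfolding uniform_cocycle_def uniform_limit_iff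
    proof (intro exI[of _ "\<lambda>_. \<Lambda>"] allI impI)
      fix e :: real assume e: "0 < e"
      obtain N where N: "\<forall>x\<in>W. N \<le> length x \<longrightarrow> \<bar>Fp E x / length x - \<Lambda>\<bar> \<le> e / 2"
        using \<Lambda> e by (meson half_gt_zero)
      define K where "K = max (max N 1) (nat \<lceil>4 * ln 4 / e\<rceil> + 1)"
      have Kgt: "4 * ln 4 / e < real k" if "K \<le> k" for k
      proof -
        have "4 * ln 4 / e \<le> real (nat \<lceil>4 * ln 4 / e\<rceil>)" by linarith
        then show ?thesis using that unfolding K_def by simp
      qed
      have pos: "dist (ln (onorm ((*v) (cocycle E (int k) \<omega>))) / real_of_int \<bar>int k\<bar>) \<Lambda> < e"
        if k: "K \<le> k" and \<omega>: "\<omega> \<in> \<Omega>" for k \<omega>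
      proof -
        define x where "x = word_at \<omega> 1 k"
        have k1: "1 \<le> k" using k unfolding K_def by simp
        have xW: "x \<in> W" unfolding W_def subwords_def x_def using \<omega> k1 by blast
        have lx: "length x = k" unfolding x_def by simp
        have xne: "x \<noteq> []" using lx k1 by auto
        have cyc: "cocycle E (int k) \<omega> = Mw E x" unfolding cocycle_def x_def by (simp add: cocycle_pos_eq)
        have a: "\<bar>Fp E x / real k - \<Lambda>\<bar> \<le> e / 2" using N xW lx k unfolding K_def by auto
        have b: "\<bar>ln (on (Mw E x)) - Fp E x\<bar> \<le> 2 * ln 4" using xne ln4pos unfolding Fp_def Fm_def by simp
        have "\<bar>ln (on (Mw E x)) / real k - \<Lambda>\<bar> < e"
          by (rule approx[OF a b Kgt[OF k] e]) (use k1 in simp)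
        then show ?thesis unfolding cyc dist_real_def by simp
      qed
      have neg: "dist (ln (onorm ((*v) (cocycle E (- int k) \<omega>))) / real_of_int \<bar>- int k\<bar>) \<Lambda> < e"
        if k: "K \<le> k" and \<omega>: "\<omega> \<in> \<Omega>" for k \<omega>
      proof -
        define x where "x = word_at \<omega> (1 - int k) k"
        have k1: "1 \<le> k" using k unfolding K_def by simp
        have xW: "x \<in> W" unfolding W_def subwords_def x_def using \<omega> k1 by blast
        have lx: "length x = k" unfolding x_def by simp
        have xne: "x \<noteq> []" using lx k1 by auto
        have cyc: "cocycle E (- int k) \<omega> = adj (Mw E x)"
          unfolding cocycle_def x_def using k1 by (simp add: cocycle_neg_eq)
        have a: "\<bar>Fp E x / real k - \<Lambda>\<bar> \<le> e / 2" using N xW lx k unfolding K_def by auto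
        have p1: "0 < on (Mw E x)" by (rule on_Mw_gt0)
        have u1: "on (adj (Mw E x)) \<le> 4 * on (Mw E x)" by (rule on_adj)
        have u2: "on (Mw E x) \<le> 4 * on (adj (Mw E x))" using on_adj[of "adj (Mw E x)"] by (simp add: adj_adj)
        have p2: "0 < on (adj (Mw E x))" using p1 u2 by linarith
        have l1: "ln (on (adj (Mw E x))) \<le> ln 4 + ln (on (Mw E x))"
        proof -
          have "ln (on (adj (Mw E x))) \<le> ln (4 * on (Mw E x))" using u1 p1 p2 by (subst ln_le_cancel_iff) auto
          also have "\<dots> = ln 4 + ln (on (Mw E x))" using p1 by (intro ln_mult_pos) auto
          finally show ?thesis .
        qed
        have l2: "ln (on (Mw E x)) \<le> ln 4 + ln (on (adj (Mw E x)))"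
        proof -
          have "ln (on (Mw E x)) \<le> ln (4 * on (adj (Mw E x)))" using u2 p1 p2 by (subst ln_le_cancel_iff) auto
          also have "\<dots> = ln 4 + ln (on (adj (Mw E x)))" using p2 by (intro ln_mult_pos) auto
          finally show ?thesis .
        qed
        have b: "\<bar>ln (on (adj (Mw E x))) - Fp E x\<bar> \<le> 2 * ln 4"
          using xne ln4pos l1 l2 unfolding Fp_def Fm_def by simp
        have "\<bar>ln (on (adj (Mw E x))) / real k - \<Lambda>\<bar> < e"
          by (rule approx[OF a b Kgt[OF k] e]) (use k1 in simp)
        then show ?thesis unfolding cyc dist_real_def by simp
      qed
      show "\<forall>\<^sub>F n in sup at_top at_bot. \<forall>\<omega>\<in>\<Omega>.
          dist (ln (onorm ((*v) (cocycle E n \<omega>))) / real_of_int \<bar>n\<bar>) \<Lambda> < e"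
        unfolding eventually_sup
      proof
        show "\<forall>\<^sub>F n in at_top. \<forall>\<omega>\<in>\<Omega>. dist (ln (onorm ((*v) (cocycle E n \<omega>))) / real_of_int \<bar>n\<bar>) \<Lambda> < e"
          unfolding eventually_at_top_linorder
        proof (intro exI[of _ "int K"] allI impI ballI)
          fix n :: int and \<omega> assume n: "int K \<le> n" and \<omega>: "\<omega> \<in> \<Omega>"
          define k where "k = nat n"
          have nk: "n = int k" using n unfolding k_def by simp
          have Kk: "K \<le> k" using n unfolding k_def by simp
          show "dist (ln (onorm ((*v) (cocycle E n \<omega>))) / real_of_int \<bar>n\<bar>) \<Lambda> < e"
            unfolding nk using pos[OF Kk \<omega>] .
        qed
        show "\<forall>\<^sub>F n in at_bot. \<forall>\<omega>\<in>\<Omega>. dist (ln (onorm ((*v) (cocycle E n \<omega>))) / real_of_int \<bar>n\<bar>) \<Lambda> < e"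
          unfolding eventually_at_bot_linorder
        proof (intro exI[of _ "- int K"] allI impI ballI)
          fix n :: int and \<omega> assume n: "n \<le> - int K" and \<omega>: "\<omega> \<in> \<Omega>"
          define k where "k = nat (- n)"
          have nk: "n = - int k" using n unfolding k_def by simp
          have Kk: "K \<le> k" using n unfolding k_def by simp
          show "dist (ln (onorm ((*v) (cocycle E n \<omega>))) / real_of_int \<bar>n\<bar>) \<Lambda> < e"
            unfolding nk using neg[OF Kk \<omega>] .
        qed
      qed
    qed
  qed
qed

end
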